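(* Let $k\ge1$ and $n$ be integers. Any two cycles of $G(n,k)$ are contiguous translates of each other: if $C_1,C_2$ are cycles of $G(n,k)$, then after possibly interchanging $C_1$ and $C_2$ there is an integer $d\ge0$ such that $C_2=C_1+d$ and $C_1+\alpha$ is a cycle of $G(n,k)$ for every integer $0\le\alpha\le d$. In particular, all cycles of $G(n,k)$ have the same length.
   Context: For an integer $\ell$, $\ell_k$ and $\ell_{k+1}$ denote the least nonnegative residues of $\ell$ modulo $k$ and $k+1$. $G(n,k)$ is the directed graph on vertices $0,1,\dots,k$ whose edges are exactly the $k$ edges $(i+n-2)_{k+1}\to(i+n-1)_k$, $1\le i\le k$; an edge $a\to a$ is a loop, counted as a cycle of length $1$. Every vertex other than $k$ and $(n-2)_{k+1}$ has in- and out-degree $1$, so $G(n,k)$ is a disjoint union of directed cycles together with one directed path (the tail) from $k$ to $(n-2)_{k+1}$. For a cycle $C: a_1\to\cdots\to a_\ell\to a_1$ and an integer $t$, $C+t$ denotes the closed walk $(a_1+t)_{k+1}\to\cdots\to(a_\ell+t)_{k+1}\to(a_1+t)_{k+1}$, and one says "$C+t$ is a cycle" when this is a cycle of $G(n,k)$. The length of a cycle is its number of edges. *)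

theory Defs
  imports Main
begin

definition G_edge :: "int \<Rightarrow> int \<Rightarrow> int \<Rightarrow> int \<Rightarrow> bool" where
  "G_edge n k a b \<longleftrightarrow> (\<exists>i\<in>{1..k}. a = (i + n - 2) mod (k + 1) \<and> b = (i + n - 1) mod k)"

text \<open>A cycle a_1 -> ... -> a_l -> a_1 of G(n,k), given as the list [a_1,...,a_l]
  of distinct vertices (a loop is the case l = 1).\<close>
definition G_cycle :: "int \<Rightarrow> int \<Rightarrow> int list \<Rightarrow> bool" where
  "G_cycle n k cs \<longleftrightarrow> cs \<noteq> [] \<and> distinct cs \<and> set cs \<subseteq> {0..k} \<and>
     (\<forall>j < length cs. G_edge n k (cs ! j) (cs ! ((j + 1) mod length cs)))"

definition cyc_shift :: "int \<Rightarrow> int \<Rightarrow> int list \<Rightarrow> int list" where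
  "cyc_shift k t cs = map (\<lambda>a. (a + t) mod (k + 1)) cs"

definition same_cycle :: "int list \<Rightarrow> int list \<Rightarrow> bool" where
  "same_cycle C D \<longleftrightarrow> (\<exists>r. D = rotate r C)"

end

theory Submission
  imports Defs
begin


lemma mod_inj_int: "(x::int) mod m = y mod m \<Longrightarrow> \<bar>x - y\<bar> < m \<Longrightarrow> x = y"
proof -
  assume h: "x mod m = y mod m" "\<bar>x - y\<bar> < m"
  then have "m dvd (x - y)" by (simp add: mod_eq_dvd_iff)
  then obtain c where c: "x - y = m * c" by blast
  show "x = y"
  proof (rule ccontr)
    assume "x \<noteq> y"
    then have "c \<noteq> 0" using c by auto
    then have "\<bar>c\<bar> \<ge> 1" by linarith
    then have "\<bar>m\<bar> * 1 \<le> \<bar>m\<bar> * \<bar>c\<bar>" by (intro mult_left_mono) auto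
    then have "\<bar>m * c\<bar> \<ge> \<bar>m\<bar>" by (simp add: abs_mult)
    then show False using h(2) c by linarith
  qed
qed

lemma edge_range: "G_edge n k a b \<Longrightarrow> 0 \<le> a \<and> a \<le> k \<and> 0 \<le> b \<and> b < k"
proof -
  assume "G_edge n k a b"
  then obtain i where i: "i \<in> {1..k}" "a = (i + n - 2) mod (k + 1)" "b = (i + n - 1) mod k"
    unfolding G_edge_def by blast
  then have k: "0 < k" by auto
  have "(i + n - 2) mod (k + 1) < k + 1" using k by (intro pos_mod_bound) auto
  then show ?thesis using i k by auto
qed

lemma edge_fun: "G_edge n k a b \<Longrightarrow> G_edge n k a b' \<Longrightarrow> b = b'"
proof -
  assume "G_edge n k a b" "G_edge n k a b'"
  then obtain i i' where i: "i \<in> {1..k}" "a = (i + n - 2) mod (k + 1)" "b = (i + n - 1) mod k"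
    and i': "i' \<in> {1..k}" "a = (i' + n - 2) mod (k + 1)" "b' = (i' + n - 1) mod k"
    unfolding G_edge_def by blast
  have "i + n - 2 = i' + n - 2"
    by (rule mod_inj_int[of _ "k+1"]) (use i i' in auto)
  then show ?thesis using i i' by simp
qed

lemma edge_inj: "G_edge n k a b \<Longrightarrow> G_edge n k a' b \<Longrightarrow> a = a'"
proof -
  assume "G_edge n k a b" "G_edge n k a' b"
  then obtain i i' where i: "i \<in> {1..k}" "a = (i + n - 2) mod (k + 1)" "b = (i + n - 1) mod k"
    and i': "i' \<in> {1..k}" "a' = (i' + n - 2) mod (k + 1)" "b = (i' + n - 1) mod k"
    unfolding G_edge_def by blast
  have "i + n - 1 = i' + n - 1"
    by (rule mod_inj_int[of _ "k"]) (use i i' in auto)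
  then show ?thesis using i i' by simp
qed

lemma edge_shift: "G_edge n k a b \<Longrightarrow> a \<noteq> (n - 3) mod (k + 1) \<Longrightarrow>
   G_edge n k ((a + 1) mod (k + 1)) ((b + 1) mod k)"
proof -
  assume e: "G_edge n k a b" and ne: "a \<noteq> (n - 3) mod (k + 1)"
  then obtain i where i: "i \<in> {1..k}" "a = (i + n - 2) mod (k + 1)" "b = (i + n - 1) mod k"
    unfolding G_edge_def by blast
  have "i \<noteq> k"
  proof
    assume "i = k"
    moreover have "k + n - 2 = (n - 3) + (k + 1)" by simp
    then have "(k + n - 2) mod (k + 1) = (n - 3) mod (k + 1)" by (metis mod_add_self2)
    then show False using ne i \<open>i = k\<close> by simp
  qed
  then have "i + 1 \<in> {1..k}" using i by auto
  moreover have "(a + 1) mod (k + 1) = ((i + 1) + n - 2) mod (k + 1)"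
  proof -
    have "((i + n - 2) mod (k + 1) + 1) mod (k + 1) = (i + n - 2 + 1) mod (k + 1)"
      by (rule mod_add_left_eq)
    moreover have "i + n - 2 + 1 = (i + 1) + n - 2" by simp
    ultimately show ?thesis using i(2) by simp
  qed
  moreover have "(b + 1) mod k = ((i + 1) + n - 1) mod k"
  proof -
    have "((i + n - 1) mod k + 1) mod k = (i + n - 1 + 1) mod k"
      by (rule mod_add_left_eq)
    moreover have "i + n - 1 + 1 = (i + 1) + n - 1" by simp
    ultimately show ?thesis using i(3) by simp
  qed
  ultimately show ?thesis unfolding G_edge_def by blast
qed



lemma cyc_edge: "G_cycle n k C \<Longrightarrow> j < length C \<Longrightarrow> G_edge n k (C ! j) (C ! ((j + 1) mod length C))"
  unfolding G_cycle_def by blast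

lemma cyc_has_pred: "G_cycle n k C \<Longrightarrow> x \<in> set C \<Longrightarrow> \<exists>y \<in> set C. G_edge n k y x"
proof -
  assume c: "G_cycle n k C" and x: "x \<in> set C"
  then obtain j where j: "j < length C" "C ! j = x" by (auto simp: in_set_conv_nth)
  define L where "L = length C"
  have L: "L > 0" using j L_def by auto
  define p where "p = (j + L - 1) mod L"
  have p: "p < L" using L p_def by auto
  have "(p + 1) mod L = j"
  proof -
    have "(p + 1) mod L = ((j + L - 1) + 1) mod L" unfolding p_def by (simp add: mod_Suc_eq)
    also have "(j + L - 1) + 1 = j + 1 * L" using L by simp
    finally show ?thesis using j L_def by simp
  qed
  then have "G_edge n k (C ! p) x" using cyc_edge[OF c, of p] p j L_def by simp
  moreover have "C ! p \<in> set C" using p L_def by simp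
  ultimately show ?thesis by blast
qed

lemma cyc_k_notin: "G_cycle n k C \<Longrightarrow> k \<notin> set C"
proof
  assume "G_cycle n k C" "k \<in> set C"
  then obtain y where "G_edge n k y k" using cyc_has_pred by blast
  then show False using edge_range[of n k y k] by simp
qed

lemma cyc_pred_in: "G_cycle n k C \<Longrightarrow> x \<in> set C \<Longrightarrow> G_edge n k y x \<Longrightarrow> y \<in> set C"
proof -
  assume a: "G_cycle n k C" "x \<in> set C" "G_edge n k y x"
  then obtain y' where "y' \<in> set C" "G_edge n k y' x" using cyc_has_pred by blast
  then show ?thesis using edge_inj[OF a(3)] by simp
qed

lemma cyc_reach_back: "(G_edge n k)\<^sup>*\<^sup>* y x \<Longrightarrow> G_cycle n k C \<Longrightarrow> x \<in> set C \<Longrightarrow> y \<in> set C"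
proof (induction rule: rtranclp_induct)
  case base then show ?case by simp
next
  case (step z x)
  have "z \<in> set C" using cyc_pred_in[OF step.prems(1) step.prems(2) step.hyps(2)] .
  then show ?case using step.IH step.prems(1) by blast
qed

lemma cyc_not_reach_k: "G_cycle n k C \<Longrightarrow> x \<in> set C \<Longrightarrow> \<not> (G_edge n k)\<^sup>*\<^sup>* k x"
  using cyc_reach_back[of n k k x C] cyc_k_notin[of n k C] by blast

lemma cyc_shift_add: "cyc_shift k a (cyc_shift k b C) = cyc_shift k (b + a) C"
  unfolding cyc_shift_def by (simp add: mod_add_left_eq add.assoc)

lemma cyc_shift_0: "set C \<subseteq> {0..k} \<Longrightarrow> cyc_shift k 0 C = C"
  unfolding cyc_shift_def by (induction C) auto


lemma cyc_shift_cycle: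
  assumes c: "G_cycle n k C" and nb: "(n - 3) mod (k + 1) \<notin> set C" and nk: "k - 1 \<notin> set C"
  shows "G_cycle n k (cyc_shift k 1 C)"
proof -
  have sub: "set C \<subseteq> {0..k}" "C \<noteq> []" "distinct C" using c unfolding G_cycle_def by blast+
  have "G_edge n k (C ! 0) (C ! ((0 + 1) mod length C))" using cyc_edge[OF c, of 0] sub(2) by simp
  from edge_range[OF this] have kpos: "k \<ge> 1" by linarith
  have inj: "inj_on (\<lambda>a. (a + 1) mod (k + 1)) {0..k}"
  proof (rule inj_onI)
    fix x y assume "x \<in> {0..k}" "y \<in> {0..k}" "(x + 1) mod (k + 1) = (y + 1) mod (k + 1)"
    then have r: "0 \<le> x" "x \<le> k" "0 \<le> y" "y \<le> k" and m: "(x + 1) mod (k + 1) = (y + 1) mod (k + 1)" by auto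
    have "\<bar>(x + 1) - (y + 1)\<bar> < k + 1" using r by arith
    then have "x + 1 = y + 1" using mod_inj_int[OF m] by blast
    then show "x = y" by simp
  qed
  have dist: "distinct (cyc_shift k 1 C)"
    unfolding cyc_shift_def distinct_map using sub(1,3) inj_on_subset[OF inj sub(1)] by blast
  have rng: "set (cyc_shift k 1 C) \<subseteq> {0..k}"
  proof
    fix y assume "y \<in> set (cyc_shift k 1 C)"
    then obtain x where "y = (x + 1) mod (k + 1)" unfolding cyc_shift_def by auto
    moreover have "0 < k + 1" using kpos by simp
    ultimately have "0 \<le> y" "y < k + 1" using pos_mod_bound[of "k+1" "x+1"] pos_mod_sign[of "k+1" "x+1"] by simp_all
    then show "y \<in> {0..k}" by simp
  qed
  have edges: "\<forall>j < length (cyc_shift k 1 C). G_edge n k (cyc_shift k 1 C ! j)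
     (cyc_shift k 1 C ! ((j + 1) mod length (cyc_shift k 1 C)))"
  proof (intro allI impI)
    fix j assume j: "j < length (cyc_shift k 1 C)"
    define L where "L = length C"
    have jL: "j < L" using j L_def unfolding cyc_shift_def by simp
    have L: "L > 0" using jL by simp
    define tt where "tt = C ! ((j + 1) mod L)"
    have e: "G_edge n k (C ! j) tt" using cyc_edge[OF c] jL L_def tt_def by simp
    have a: "C ! j \<noteq> (n - 3) mod (k + 1)" using nb jL L_def nth_mem by metis
    have tin: "tt \<in> set C" using L L_def tt_def by simp
    then have t: "tt \<noteq> k - 1" using nk by metis
    have tr: "0 \<le> tt" "tt < k" using edge_range[OF e] by simp_all
    then have "tt + 1 < k" using t by simp
    then have "(tt + 1) mod k = tt + 1" "(tt + 1) mod (k + 1) = tt + 1" using tr by simp_all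
    then have "(tt + 1) mod k = (tt + 1) mod (k + 1)" by simp
    then have "G_edge n k ((C ! j + 1) mod (k + 1)) ((tt + 1) mod (k + 1))"
      using edge_shift[OF e a] by simp
    then show "G_edge n k (cyc_shift k 1 C ! j)
     (cyc_shift k 1 C ! ((j + 1) mod length (cyc_shift k 1 C)))"
      unfolding cyc_shift_def using jL L L_def tt_def by simp
  qed
  have "cyc_shift k 1 C \<noteq> []" using sub(2) unfolding cyc_shift_def by simp
  then show ?thesis unfolding G_cycle_def using dist rng edges by blast
qed



lemma cyc_follow:
  assumes c1: "G_cycle n k C1" and c2: "G_cycle n k C2" and i: "i < length C1" and j: "j < length C2"
    and eq: "C1 ! i = C2 ! j"
  shows "C2 ! ((j + t) mod length C2) = C1 ! ((i + t) mod length C1)"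
proof (induction t)
  case 0 then show ?case using i j eq by simp
next
  case (Suc t)
  have l1: "(i + t) mod length C1 < length C1" using i by (intro mod_less_divisor) (cases C1, auto)
  have l2: "(j + t) mod length C2 < length C2" using j by (intro mod_less_divisor) (cases C2, auto)
  have e1: "G_edge n k (C1 ! ((i + t) mod length C1)) (C1 ! ((i + Suc t) mod length C1))"
    using cyc_edge[OF c1 l1] by (simp add: mod_Suc_eq)
  have e2: "G_edge n k (C2 ! ((j + t) mod length C2)) (C2 ! ((j + Suc t) mod length C2))"
    using cyc_edge[OF c2 l2] by (simp add: mod_Suc_eq)
  show ?case using edge_fun[OF e1] e2 Suc.IH by simp
qed

lemma mod_cancel_aux: "(i + (L2::nat)) mod L1 = i \<Longrightarrow> i < L1 \<Longrightarrow> L1 dvd L2"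
  by (metis dvd_minus_mod nat_diff_split)

lemma cyc_rot:
  assumes c1: "G_cycle n k C1" and c2: "G_cycle n k C2" and x1: "x \<in> set C1" and x2: "x \<in> set C2"
  shows "\<exists>r. C2 = rotate r C1"
proof -
  obtain i where i: "i < length C1" "C1 ! i = x" using x1 by (auto simp: in_set_conv_nth)
  obtain j where j: "j < length C2" "C2 ! j = x" using x2 by (auto simp: in_set_conv_nth)
  have d1: "distinct C1" "distinct C2" using c1 c2 unfolding G_cycle_def by blast+
  have f12: "\<And>t. C2 ! ((j + t) mod length C2) = C1 ! ((i + t) mod length C1)"
    using cyc_follow[OF c1 c2 i(1) j(1)] i j by simp
  have f21: "\<And>t. C1 ! ((i + t) mod length C1) = C2 ! ((j + t) mod length C2)"
    using f12 by simp
  have "C1 ! ((i + length C2) mod length C1) = C1 ! i"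
    using f12[of "length C2"] i j by simp
  then have "(i + length C2) mod length C1 = i"
    using d1(1) i(1) nth_eq_iff_index_eq[OF d1(1)] by (metis mod_less_divisor gr_zeroI not_less0)
  then have dv1: "length C1 dvd length C2" using mod_cancel_aux i(1) by blast
  have "C2 ! ((j + length C1) mod length C2) = C2 ! j"
    using f21[of "length C1"] i j by simp
  then have "(j + length C1) mod length C2 = j"
    using d1(2) j(1) nth_eq_iff_index_eq[OF d1(2)] by (metis mod_less_divisor gr_zeroI not_less0)
  then have dv2: "length C2 dvd length C1" using mod_cancel_aux j(1) by blast
  have len: "length C1 = length C2" using dv1 dv2 by (simp add: dvd_antisym)
  define L where "L = length C1"
  define r where "r = i + L - j"
  have "C2 = rotate r C1"
  proof (rule nth_equalityI)
    show "length C2 = length (rotate r C1)" using len by simp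
    fix u assume u: "u < length C2"
    have "C2 ! u = C2 ! ((j + (u + L - j)) mod length C2)"
      using u j len L_def by simp
    also have "\<dots> = C1 ! ((i + (u + L - j)) mod L)" using f12 L_def by simp
    also have "i + (u + L - j) = r + u" using j len L_def r_def by simp
    also have "C1 ! ((r + u) mod L) = rotate r C1 ! u" using nth_rotate[of u C1 r] u len L_def by simp
    finally show "C2 ! u = rotate r C1 ! u" .
  qed
  then show ?thesis by blast
qed



lemma shiftR:
  assumes nb: "\<not> (G_edge n k)\<^sup>*\<^sup>* k ((n - 3) mod (k + 1))"
    and nk: "\<not> (G_edge n k)\<^sup>*\<^sup>* k (k - 1)"
    and rx: "(G_edge n k)\<^sup>*\<^sup>* k x"
  shows "(G_edge n k)\<^sup>*\<^sup>* x y \<Longrightarrow> (G_edge n k)\<^sup>*\<^sup>* ((x + 1) mod (k + 1)) ((y + 1) mod (k + 1))"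
proof (induction rule: rtranclp_induct)
  case base then show ?case by simp
next
  case (step y' y)
  have ry': "(G_edge n k)\<^sup>*\<^sup>* k y'" using rx step.hyps(1) by simp
  have ry: "(G_edge n k)\<^sup>*\<^sup>* k y" using ry' step.hyps(2) by simp
  have a: "y' \<noteq> (n - 3) mod (k + 1)" using ry' nb by blast
  have t: "y \<noteq> k - 1" using ry nk by blast
  have tr: "0 \<le> y" "y < k" using edge_range[OF step.hyps(2)] by simp_all
  then have "y + 1 < k" using t by simp
  then have "(y + 1) mod k = y + 1" "(y + 1) mod (k + 1) = y + 1" using tr by simp_all
  then have "G_edge n k ((y' + 1) mod (k + 1)) ((y + 1) mod (k + 1))"
    using edge_shift[OF step.hyps(2) a] by simp
  with step.IH show ?case by (rule rtranclp.rtrancl_into_rtrancl)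
qed

lemma top_unique:
  assumes k1: "k \<ge> 1" and c1: "G_cycle n k D1" and c2: "G_cycle n k D2"
    and a: "k - 1 \<in> set D1" and b: "(n - 3) mod (k + 1) \<in> set D2"
  shows "(n - 3) mod (k + 1) \<in> set D1"
proof (rule ccontr)
  assume nbD: "(n - 3) mod (k + 1) \<notin> set D1"
  have nb: "\<not> (G_edge n k)\<^sup>*\<^sup>* k ((n - 3) mod (k + 1))" using cyc_not_reach_k[OF c2 b] .
  have nk: "\<not> (G_edge n k)\<^sup>*\<^sup>* k (k - 1)" using cyc_not_reach_k[OF c1 a] .
  define L where "L = length D1"
  obtain i0 where i0: "i0 < L" "D1 ! i0 = k - 1" using a L_def by (auto simp: in_set_conv_nth)
  have Lp: "L > 0" using i0 by simp
  have dist: "distinct D1" using c1 unfolding G_cycle_def by blast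
  have claim: "j < L \<Longrightarrow> (G_edge n k)\<^sup>*\<^sup>* k ((D1 ! ((i0 + j) mod L) + 1) mod (k + 1))" for j
  proof (induction j)
    case 0
    have "(k - 1 + 1) mod (k + 1) = k" using k1 by simp
    then show ?case using i0 by simp
  next
    case (Suc j)
    define s where "s = D1 ! ((i0 + j) mod L)"
    define tt where "tt = D1 ! ((i0 + Suc j) mod L)"
    have ml: "(i0 + j) mod L < L" using Lp by simp
    have e: "G_edge n k s tt" using cyc_edge[OF c1, of "(i0 + j) mod L"] ml
      unfolding s_def tt_def L_def by (simp add: mod_Suc_eq)
    have sa: "s \<noteq> (n - 3) mod (k + 1)" using nbD ml unfolding s_def L_def by (metis nth_mem)
    have tne: "tt \<noteq> k - 1"
    proof
      assume "tt = k - 1"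
      then have "D1 ! ((i0 + Suc j) mod L) = D1 ! i0" using i0 tt_def by simp
      then have "(i0 + Suc j) mod L = i0" using nth_eq_iff_index_eq[OF dist] i0 Lp L_def
        by (metis mod_less_divisor)
      then have "L dvd Suc j" using mod_cancel_aux i0 by blast
      then show False using Suc.prems by (simp add: nat_dvd_not_less)
    qed
    have tr: "0 \<le> tt" "tt < k" using edge_range[OF e] by simp_all
    then have "tt + 1 < k" using tne by simp
    then have "(tt + 1) mod k = tt + 1" "(tt + 1) mod (k + 1) = tt + 1" using tr by simp_all
    then have "G_edge n k ((s + 1) mod (k + 1)) ((tt + 1) mod (k + 1))"
      using edge_shift[OF e sa] by simp
    moreover have "(G_edge n k)\<^sup>*\<^sup>* k ((s + 1) mod (k + 1))" using Suc s_def by simp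
    ultimately show ?case unfolding tt_def by (rule rtranclp.rtrancl_into_rtrancl[rotated])
  qed
  define q where "q = D1 ! ((i0 + (L - 1)) mod L)"
  have rq: "(G_edge n k)\<^sup>*\<^sup>* k ((q + 1) mod (k + 1))" using claim[of "L - 1"] Lp q_def by simp
  have ml: "(i0 + (L - 1)) mod L < L" using Lp by simp
  have "((i0 + (L - 1)) mod L + 1) mod L = (i0 + L) mod L" using Lp by (simp add: mod_Suc_eq)
  also have "\<dots> = i0" using i0 by simp
  finally have "G_edge n k q (k - 1)" using cyc_edge[OF c1 ml[unfolded L_def]] i0 q_def L_def by simp
  moreover have "q \<noteq> (n - 3) mod (k + 1)" using nbD ml unfolding q_def L_def by (metis nth_mem)
  ultimately have "G_edge n k ((q + 1) mod (k + 1)) ((k - 1 + 1) mod k)" using edge_shift by blast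
  then have "G_edge n k ((q + 1) mod (k + 1)) 0" by simp
  with rq have r0: "(G_edge n k)\<^sup>*\<^sup>* k 0" by (rule rtranclp.rtrancl_into_rtrancl)
  have chain: "(G_edge n k)\<^sup>*\<^sup>* k ((k + int m) mod (k + 1)) \<and>
      (G_edge n k)\<^sup>*\<^sup>* ((k + int m) mod (k + 1)) ((k + int m + 1) mod (k + 1))" for m
  proof (induction m)
    case 0
    have "k mod (k + 1) = k" using k1 by simp
    then show ?case using r0 by simp
  next
    case (Suc m)
    define x where "x = (k + int m) mod (k + 1)"
    define y where "y = (k + int m + 1) mod (k + 1)"
    have rx: "(G_edge n k)\<^sup>*\<^sup>* k x" and xy: "(G_edge n k)\<^sup>*\<^sup>* x y" using Suc x_def y_def by simp_all
    have ry: "(G_edge n k)\<^sup>*\<^sup>* k y" using rx xy by simp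
    have "(G_edge n k)\<^sup>*\<^sup>* ((x + 1) mod (k + 1)) ((y + 1) mod (k + 1))"
      using shiftR[OF nb nk rx xy] .
    moreover have "(x + 1) mod (k + 1) = y" unfolding x_def y_def by (simp add: mod_add_left_eq)
    moreover have "(y + 1) mod (k + 1) = (k + int (Suc m) + 1) mod (k + 1)"
    proof -
      have "((k + int m + 1) mod (k + 1) + 1) mod (k + 1) = (k + int m + 1 + 1) mod (k + 1)"
        by (rule mod_add_left_eq)
      moreover have "k + int m + 1 + 1 = k + int (Suc m) + 1" by simp
      ultimately show ?thesis unfolding y_def by simp
    qed
    moreover have "y = (k + int (Suc m)) mod (k + 1)"
    proof -
      have "k + int m + 1 = k + int (Suc m)" by simp
      then show ?thesis unfolding y_def by metis
    qed
    ultimately show ?case using ry by simp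
  qed
  have "(k + int (nat k)) mod (k + 1) = k - 1"
  proof -
    have "k + int (nat k) = (k - 1) + (k + 1)" using k1 by simp
    then have "(k + int (nat k)) mod (k + 1) = (k - 1) mod (k + 1)" by (metis mod_add_self2)
    then show ?thesis using k1 by simp
  qed
  then show False using chain[of "nat k"] nk by simp
qed



lemma to_top:
  assumes k1: "k \<ge> 1" and c: "G_cycle n k C"
  shows "\<exists>e::nat. (\<forall>\<alpha>\<le>e. G_cycle n k (cyc_shift k (int \<alpha>) C)) \<and>
     ((n - 3) mod (k + 1) \<in> set (cyc_shift k (int e) C) \<or> k - 1 \<in> set (cyc_shift k (int e) C))"
proof -
  define P where "P = (\<lambda>e::nat. (n - 3) mod (k + 1) \<in> set (cyc_shift k (int e) C) \<or> k - 1 \<in> set (cyc_shift k (int e) C))"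
  have sub: "set C \<subseteq> {0..k}" "C \<noteq> []" using c unfolding G_cycle_def by blast+
  define x where "x = C ! 0"
  have xC: "x \<in> set C" using sub(2) x_def by simp
  then have xr: "0 \<le> x" "x \<le> k" using sub(1) by auto
  define e0 where "e0 = nat ((k - 1 - x) mod (k + 1))"
  have "int e0 = (k - 1 - x) mod (k + 1)" unfolding e0_def using k1 by simp
  then have "(x + int e0) mod (k + 1) = (x + (k - 1 - x)) mod (k + 1)" by (simp add: mod_add_right_eq)
  also have "\<dots> = k - 1" using k1 by simp
  finally have "k - 1 \<in> set (cyc_shift k (int e0) C)" unfolding cyc_shift_def using xC by force
  then have Pe0: "P e0" unfolding P_def by blast
  define e where "e = (LEAST e. P e)"
  have Pe: "P e" unfolding e_def using Pe0 by (rule LeastI)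
  have cyc: "\<alpha> \<le> e \<Longrightarrow> G_cycle n k (cyc_shift k (int \<alpha>) C)" for \<alpha>
  proof (induction \<alpha>)
    case 0 then show ?case using cyc_shift_0[OF sub(1)] c by simp
  next
    case (Suc \<alpha>)
    have "\<alpha> < e" using Suc.prems by simp
    then have nP: "\<not> P \<alpha>" unfolding e_def by (rule not_less_Least)
    have ca: "G_cycle n k (cyc_shift k (int \<alpha>) C)" using Suc by simp
    have "G_cycle n k (cyc_shift k 1 (cyc_shift k (int \<alpha>) C))"
      using cyc_shift_cycle[OF ca] nP unfolding P_def by blast
    then show ?case by (simp add: cyc_shift_add add.commute)
  qed
  show ?thesis using cyc Pe unfolding P_def by blast
qed

lemma direction:
  assumes c2: "G_cycle n k C2" and le: "e2 \<le> e1"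
    and h1: "\<forall>\<alpha>\<le>e1. G_cycle n k (cyc_shift k (int \<alpha>) C1)"
    and rot: "cyc_shift k (int e2) C2 = rotate r (cyc_shift k (int e1) C1)"
  shows "\<exists>d::int. d \<ge> 0 \<and> same_cycle (cyc_shift k d C1) C2 \<and>
               (\<forall>\<alpha>::int. 0 \<le> \<alpha> \<and> \<alpha> \<le> d \<longrightarrow> G_cycle n k (cyc_shift k \<alpha> C1))"
    and "length C1 = length C2"
proof -
  have sub: "set C2 \<subseteq> {0..k}" using c2 unfolding G_cycle_def by blast
  have "C2 = cyc_shift k (- int e2) (cyc_shift k (int e2) C2)"
    using cyc_shift_0[OF sub] by (simp add: cyc_shift_add)
  also have "\<dots> = cyc_shift k (- int e2) (rotate r (cyc_shift k (int e1) C1))"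
    by (simp only: rot)
  also have "\<dots> = rotate r (cyc_shift k (- int e2) (cyc_shift k (int e1) C1))"
    unfolding cyc_shift_def by (simp only: rotate_map)
  also have "\<dots> = rotate r (cyc_shift k (int (e1 - e2)) C1)"
    using le by (simp add: cyc_shift_add of_nat_diff)
  finally have eq: "C2 = rotate r (cyc_shift k (int (e1 - e2)) C1)" .
  show "length C1 = length C2" using eq unfolding cyc_shift_def by simp
  have "\<forall>\<alpha>::int. 0 \<le> \<alpha> \<and> \<alpha> \<le> int (e1 - e2) \<longrightarrow> G_cycle n k (cyc_shift k \<alpha> C1)"
  proof (intro allI impI)
    fix \<alpha> :: int assume a: "0 \<le> \<alpha> \<and> \<alpha> \<le> int (e1 - e2)"
    then have "nat \<alpha> \<le> e1" by linarith
    then have "G_cycle n k (cyc_shift k (int (nat \<alpha>)) C1)" using h1 by blast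
    then show "G_cycle n k (cyc_shift k \<alpha> C1)" using a by simp
  qed
  moreover have "same_cycle (cyc_shift k (int (e1 - e2)) C1) C2"
    unfolding same_cycle_def using eq by blast
  ultimately show "\<exists>d::int. d \<ge> 0 \<and> same_cycle (cyc_shift k d C1) C2 \<and>
               (\<forall>\<alpha>::int. 0 \<le> \<alpha> \<and> \<alpha> \<le> d \<longrightarrow> G_cycle n k (cyc_shift k \<alpha> C1))"
    by (intro exI[of _ "int (e1 - e2)"]) simp
qed

theorem theorem3p9:
  fixes n k :: int and C1 C2 :: "int list"
  assumes "k \<ge> 1" and "G_cycle n k C1" and "G_cycle n k C2"
  shows "(\<exists>A B. ((A = C1 \<and> B = C2) \<or> (A = C2 \<and> B = C1)) \<and>
            (\<exists>d::int. d \<ge> 0 \<and> same_cycle (cyc_shift k d A) B \<and>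
               (\<forall>\<alpha>::int. 0 \<le> \<alpha> \<and> \<alpha> \<le> d \<longrightarrow> G_cycle n k (cyc_shift k \<alpha> A))))
         \<and> length C1 = length C2"
proof -
  obtain e1 where h1: "\<forall>\<alpha>\<le>e1. G_cycle n k (cyc_shift k (int \<alpha>) C1)"
    and p1: "(n - 3) mod (k + 1) \<in> set (cyc_shift k (int e1) C1) \<or> k - 1 \<in> set (cyc_shift k (int e1) C1)"
    using to_top[OF assms(1,2)] by blast
  obtain e2 where h2: "\<forall>\<alpha>\<le>e2. G_cycle n k (cyc_shift k (int \<alpha>) C2)"
    and p2: "(n - 3) mod (k + 1) \<in> set (cyc_shift k (int e2) C2) \<or> k - 1 \<in> set (cyc_shift k (int e2) C2)"
    using to_top[OF assms(1,3)] by blast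
  define T1 where "T1 = cyc_shift k (int e1) C1"
  define T2 where "T2 = cyc_shift k (int e2) C2"
  have t1: "G_cycle n k T1" using h1 T1_def by blast
  have t2: "G_cycle n k T2" using h2 T2_def by blast
  have "\<exists>x. x \<in> set T1 \<and> x \<in> set T2"
  proof (cases "(n - 3) mod (k + 1) \<in> set T1")
    case True
    show ?thesis
    proof (cases "(n - 3) mod (k + 1) \<in> set T2")
      case True then show ?thesis using \<open>(n - 3) mod (k + 1) \<in> set T1\<close> by blast
    next
      case False
      then have "k - 1 \<in> set T2" using p2 T2_def by blast
      then have "(n - 3) mod (k + 1) \<in> set T2" using top_unique[OF assms(1) t2 t1] True by blast
      then show ?thesis using False by blast
    qed
  next
    case False
    then have k1: "k - 1 \<in> set T1" using p1 T1_def by blast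
    show ?thesis
    proof (cases "(n - 3) mod (k + 1) \<in> set T2")
      case True
      then have "(n - 3) mod (k + 1) \<in> set T1" using top_unique[OF assms(1) t1 t2 k1] by blast
      then show ?thesis using False by blast
    next
      case False
      then have "k - 1 \<in> set T2" using p2 T2_def by blast
      then show ?thesis using k1 by blast
    qed
  qed
  then obtain x where x: "x \<in> set T1" "x \<in> set T2" by blast
  obtain r where r: "T2 = rotate r T1" using cyc_rot[OF t1 t2 x] by blast
  obtain r' where r': "T1 = rotate r' T2" using cyc_rot[OF t2 t1 x(2) x(1)] by blast
  show ?thesis
  proof (cases "e2 \<le> e1")
    case True
    have rr: "cyc_shift k (int e2) C2 = rotate r (cyc_shift k (int e1) C1)" using r T1_def T2_def by simp
    show ?thesis using direction[OF assms(3) True h1 rr] by blast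
  next
    case False
    then have le: "e1 \<le> e2" by simp
    have rr: "cyc_shift k (int e1) C1 = rotate r' (cyc_shift k (int e2) C2)" using r' T1_def T2_def by simp
    show ?thesis using direction[OF assms(2) le h2 rr] by metis
  qed
qed


end
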